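(* Let $X_1,\dots,X_n$ be i.i.d. from $P$ and $\mathcal{S}_n=\{X_1,\dots,X_n\}$. Assume $\rho>0$ and that there exist $t_0>0$ and $C_2<\infty$ such that the function $t\mapsto\rho(t)$ (with $\rho(0):=\rho$) is differentiable on $[0,t_0]$ with $|\rho'(t)|\le C_2$ there. Then for all $n\ge1$ and all $0<t<\min\{\rho/(2C_2),\,t_0\}$, $$\mathbb{P}\big(H(\mathcal{S}_n,\mathbb{M})>t\big)\;\le\;\frac{2^{d+1}}{\rho\,t^d}\exp\Big(-\frac{n\rho\,t^d}{2}\Big).$$
   Context: $\mathbb{M}\subset\mathbb{R}^D$ is a compact $d$-dimensional smooth submanifold with positive reach and $P$ is a probability distribution with support $\mathbb{M}$. $B(x,r)$ is the closed Euclidean ball of radius $r$ about $x$. The Hausdorff distance between sets $A,B\subset\mathbb{R}^D$ is $H(A,B)=\max\{\sup_{a\in A}\inf_{b\in B}\|a-b\|,\ \sup_{b\in B}\inf_{a\in A}\|a-b\|\}$. For $x\in\mathbb{M}$ and $t>0$ define $\rho(x,t)=P(B(x,t/2))/t^d$, $\rho(t)=\inf_{x\in\mathbb{M}}\rho(x,t)$, and $\rho=\lim_{t\downarrow0}\rho(t)$ (assumed to exist). *)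

theory Defs
  imports "HOL-Analysis.Analysis" "HOL-Probability.Probability"
begin

text \<open>Hausdorff distance, as in the paper (for nonempty bounded sets).\<close>
definition hausdorff_dist :: "'a::metric_space set \<Rightarrow> 'a set \<Rightarrow> real" where
  "hausdorff_dist A B = max (SUP a\<in>A. infdist a B) (SUP b\<in>B. infdist b A)"

fun iter_deriv :: "'a::real_normed_vector list \<Rightarrow> ('a \<Rightarrow> 'b::real_normed_vector) \<Rightarrow> 'a \<Rightarrow> 'b" where
  "iter_deriv [] f = f"
| "iter_deriv (v # vs) f = (\<lambda>x. frechet_derivative (iter_deriv vs f) (at x) v)"

definition smooth_on :: "'a::real_normed_vector set \<Rightarrow> ('a \<Rightarrow> 'b::real_normed_vector) \<Rightarrow> bool" where
  "smooth_on S f \<longleftrightarrow> open S \<and> (\<forall>vs. iter_deriv vs f differentiable_on S)"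

definition smooth_submanifold :: "nat \<Rightarrow> 'a::euclidean_space set \<Rightarrow> bool" where
  "smooth_submanifold d M \<longleftrightarrow>
    (\<forall>p\<in>M. \<exists>W W' (\<Phi>::'a \<Rightarrow> 'a) \<Psi> L.
       open W \<and> p \<in> W \<and> open W' \<and> smooth_on W \<Phi> \<and> smooth_on W' \<Psi> \<and>
       \<Phi> ` W = W' \<and> (\<forall>x\<in>W. \<Psi> (\<Phi> x) = x) \<and> (\<forall>y\<in>W'. \<Phi> (\<Psi> y) = y) \<and>
       subspace L \<and> dim L = d \<and> \<Phi> ` (M \<inter> W) = W' \<inter> L)"

definition positive_reach :: "'a::euclidean_space set \<Rightarrow> bool" where
  "positive_reach M \<longleftrightarrow> (\<exists>r>0. \<forall>x. infdist x M < r \<longrightarrow> (\<exists>!y. y \<in> M \<and> dist x y = infdist x M))"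

definition measure_support :: "'a::topological_space measure \<Rightarrow> 'a set" where
  "measure_support P = \<Inter>{C. closed C \<and> C \<in> sets P \<and> measure P C = 1}"

definition rho_pt :: "'a::metric_space measure \<Rightarrow> nat \<Rightarrow> 'a \<Rightarrow> real \<Rightarrow> real" where
  "rho_pt P d x t = measure P (cball x (t/2)) / t ^ d"

definition rho_fun :: "'a::metric_space measure \<Rightarrow> 'a set \<Rightarrow> nat \<Rightarrow> real \<Rightarrow> real" where
  "rho_fun P M d t = (INF x\<in>M. rho_pt P d x t)"

end

theory Submission
  imports Defs
begin


lemma support_full:
  assumes "prob_space P" "sets P = sets (borel::'a::euclidean_space measure)"
  shows "measure P (- measure_support P) = 0" "measure_support P \<in> sets P"
proof -
  interpret prob_space P by fact
  define F where "F = uminus ` {C. closed C \<and> C \<in> sets P \<and> measure P C = 1}"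
  have eq: "- measure_support P = \<Union>F"
    unfolding F_def measure_support_def by auto
  have op: "\<And>S. S \<in> F \<Longrightarrow> open S" unfolding F_def by auto
  obtain F' where F': "F' \<subseteq> F" "countable F'" "\<Union>F' = \<Union>F"
    using Lindelof[OF op] by metis
  have null: "S \<in> null_sets P" if "S \<in> F" for S
  proof -
    from that obtain C where C: "closed C" "C \<in> sets P" "measure P C = 1" "S = - C"
      unfolding F_def by auto
    have "S = space P - C" using C(4) assms(2) by (simp add: sets_eq_imp_space_eq Compl_eq_Diff_UNIV)
    then have "measure P S = 0" using prob_compl[OF C(2)] C(3) by simp
    moreover have "S \<in> sets P" using C assms(2) by auto
    ultimately show ?thesis by (simp add: emeasure_eq_measure null_sets_def)
  qed
  have "(\<Union>S\<in>F'. S) \<in> null_sets P"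
    using F' null by (intro null_sets_UN') auto
  then have "\<Union>F' \<in> null_sets P" by simp
  then have "- measure_support P \<in> null_sets P" using eq F' by simp
  then show "measure P (- measure_support P) = 0"
    by (simp add: measure_def null_setsD1)
  have "closed (measure_support P)" unfolding measure_support_def by (intro closed_Inter) auto
  then show "measure_support P \<in> sets P"
    using assms(2) by simp
qed

lemma pim_prod:
  assumes "prob_space P" "\<And>i. i < (n::nat) \<Longrightarrow> A i \<in> sets P"
  shows "measure (PiM {..<n} (\<lambda>_. P)) (PiE {..<n} A) = (\<Prod>i<n. measure P (A i))"
proof -
  interpret prob_space P by fact
  interpret product_sigma_finite "\<lambda>_. P"
    by standard
  have "emeasure (PiM {..<n} (\<lambda>_. P)) (PiE {..<n} A) = (\<Prod>i<n. emeasure P (A i))"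
    by (rule emeasure_PiM) (auto simp: assms)

  also have "\<dots> = ennreal (\<Prod>i<n. measure P (A i))"
    by (simp add: emeasure_eq_measure prod_ennreal)
  finally show ?thesis by (simp add: measure_def prod_nonneg)
qed



lemma mvt_bound:
  fixes g :: "real \<Rightarrow> real"
  assumes H: "\<forall>s\<in>{0..t0}. \<exists>r'. (g has_real_derivative r') (at s within {0..t0}) \<and> \<bar>r'\<bar> \<le> C2"
    and s: "0 < s" "s < t0"
  shows "\<bar>g s - g 0\<bar> \<le> C2 * s"
proof -
  have "continuous_on {0..t0} g"
    unfolding continuous_on_eq_continuous_within
    using H DERIV_continuous by blast
  then have c: "continuous_on {0..s} g"
    by (rule continuous_on_subset) (use s in auto)
  have d: "g differentiable (at x)" if x: "0 < x" "x < s" for x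
  proof -
    obtain r' where "(g has_real_derivative r') (at x within {0..t0})"
      using H x s by force
    then have "(g has_real_derivative r') (at x)"
      using at_within_Icc_at[of 0 x t0] x s by simp
    then show ?thesis using real_differentiable_def by blast
  qed
  obtain l z where lz: "0 < z" "z < s" "DERIV g z :> l" "g s - g 0 = (s - 0) * l"
    using MVT[OF s(1) c d] by blast
  obtain r' where r': "(g has_real_derivative r') (at z within {0..t0})" "\<bar>r'\<bar> \<le> C2"
    using H lz s by force
  then have "(g has_real_derivative r') (at z)"
    using at_within_Icc_at[of 0 z t0] lz s by simp
  then have "l = r'" using lz(3) DERIV_unique by blast
  then show ?thesis using lz(4) r'(2) s
    by (simp add: abs_mult mult.commute mult_right_mono)
qed



definition sep :: "'a::metric_space set \<Rightarrow> real \<Rightarrow> 'a set \<Rightarrow> bool" where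
  "sep M r F \<longleftrightarrow> finite F \<and> F \<subseteq> M \<and> (\<forall>x\<in>F. \<forall>y\<in>F. x \<noteq> y \<longrightarrow> dist x y > 2 * r)"

lemma sep_card:
  fixes P :: "'a::euclidean_space measure"
  assumes "prob_space P" "sets P = sets borel" "c > 0" "\<forall>x\<in>M. measure P (cball x r) \<ge> c"
    and "sep M r F"
  shows "real (card F) * c \<le> 1"
proof -
  interpret prob_space P by fact
  have F: "finite F" "F \<subseteq> M" and D: "\<forall>x\<in>F. \<forall>y\<in>F. x \<noteq> y \<longrightarrow> dist x y > 2 * r"
    using assms(5) unfolding sep_def by auto
  have disj: "disjoint_family_on (\<lambda>x. cball x r) F"
    unfolding disjoint_family_on_def
  proof (intro ballI impI)
    fix x y assume xy: "x \<in> F" "y \<in> F" "x \<noteq> y"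
    show "cball x r \<inter> cball y r = {}"
    proof (rule ccontr)
      assume "cball x r \<inter> cball y r \<noteq> {}"
      then obtain z where "dist x z \<le> r" "dist y z \<le> r" by auto
      then have "dist x y \<le> 2 * r" using dist_triangle[of x y z] dist_commute[of z y] by linarith
      then show False using D xy by force
    qed
  qed
  have "real (card F) * c = (\<Sum>x\<in>F. c)" by simp
  also have "\<dots> \<le> (\<Sum>x\<in>F. measure P (cball x r))"
    using assms(4) F by (intro sum_mono) auto
  also have "\<dots> = measure P (\<Union>x\<in>F. cball x r)"
    using F disj assms(2) by (intro measure_finite_Union[symmetric]) auto
  also have "\<dots> \<le> 1" by (rule prob_le_1)
  finally show ?thesis .
qed

lemma packing:
  fixes P :: "'a::euclidean_space measure"
  assumes "prob_space P" "sets P = sets borel" "c > 0" "\<forall>x\<in>M. measure P (cball x r) \<ge> c"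
    and r: "r \<ge> 0"
  shows "\<exists>F. finite F \<and> F \<subseteq> M \<and> real (card F) \<le> 1 / c \<and> (\<forall>m\<in>M. \<exists>x\<in>F. dist m x \<le> 2 * r)"
proof -
  define K where "K = card ` {F. sep M r F}"
  have bd: "k \<le> nat (floor (1 / c))" if "k \<in> K" for k
  proof -
    obtain F where F: "sep M r F" "k = card F" using \<open>k \<in> K\<close> K_def by auto
    have "real k * c \<le> 1" using sep_card[OF assms(1-4) F(1)] F(2) by simp
    then have "real k \<le> 1 / c" using assms(3) by (simp add: field_simps)
    then show ?thesis by linarith
  qed
  have "finite K" using bd by (meson finite_atMost finite_subset subsetI atMost_iff)
  have "0 \<in> K" unfolding K_def sep_def by (rule image_eqI[of _ _ "{}"]) auto
  then have "K \<noteq> {}" by auto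
  obtain F where F: "sep M r F" "card F = Max K"
    using Max_in[OF \<open>finite K\<close> \<open>K \<noteq> {}\<close>] K_def by auto
  have cov: "\<exists>x\<in>F. dist m x \<le> 2 * r" if m: "m \<in> M" for m
  proof (rule ccontr)
    assume "\<not> ?thesis"
    then have far: "\<forall>x\<in>F. dist m x > 2 * r" by auto
    then have "m \<notin> F" using r by force
    have "sep M r (insert m F)" using F(1) m far unfolding sep_def
      by (auto simp: dist_commute)
    then have "card (insert m F) \<in> K" unfolding K_def by auto
    then have "card (insert m F) \<le> Max K" using \<open>finite K\<close> by auto
    moreover have "card (insert m F) = Suc (card F)" using \<open>m \<notin> F\<close> F(1) unfolding sep_def by auto
    ultimately show False using F(2) by simp
  qed
  have "real (card F) * c \<le> 1" using sep_card[OF assms(1-4) F(1)] .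
  then have "real (card F) \<le> 1 / c" using assms(3) by (simp add: field_simps)
  then show ?thesis using F(1) cov unfolding sep_def by blast
qed


lemma hd_le:
  fixes S M :: "'a::metric_space set"
  assumes "S \<noteq> {}" "S \<subseteq> M" "\<forall>m\<in>M. \<exists>s\<in>S. dist m s \<le> t" "t \<ge> 0"
  shows "hausdorff_dist S M \<le> t"
proof -
  have "(SUP a\<in>S. infdist a M) \<le> t"
    using assms by (intro cSUP_least) auto
  moreover have "(SUP b\<in>M. infdist b S) \<le> t"
  proof (rule cSUP_least)
    show "M \<noteq> {}" using assms by auto
    fix b assume "b \<in> M"
    then obtain s where "s \<in> S" "dist b s \<le> t" using assms by auto
    then show "infdist b S \<le> t" using infdist_le[of s S b] by linarith
  qed
  ultimately show ?thesis unfolding hausdorff_dist_def by simp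
qed

lemma rho_lower:
  fixes P :: "'a::metric_space measure"
  assumes "x \<in> M" "s > 0"
  shows "rho_fun P M d s * s ^ d \<le> measure P (cball x (s/2))"
proof -
  have "rho_fun P M d s \<le> rho_pt P d x s"
    unfolding rho_fun_def
    by (rule cINF_lower) (auto simp: assms bdd_below_def rho_pt_def intro!: exI[of _ 0] divide_nonneg_pos)
  then show ?thesis using assms
    by (simp add: rho_pt_def pos_le_divide_eq)
qed

theorem mainTheorem2:
  fixes M :: "'a::euclidean_space set" and d :: nat and P :: "'a measure"
    and rho0 t0 C2 :: real and n :: nat and t :: real
  assumes "compact M" and "smooth_submanifold d M" and "positive_reach M"
    and "prob_space P" and "sets P = sets borel" and "measure_support P = M"
    and "((\<lambda>s. rho_fun P M d s) \<longlongrightarrow> rho0) (at_right 0)"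
    and "rho0 > 0" and "t0 > 0"
    and "\<forall>s\<in>{0..t0}. \<exists>r'. ((\<lambda>s. if s = 0 then rho0 else rho_fun P M d s)
            has_real_derivative r') (at s within {0..t0}) \<and> \<bar>r'\<bar> \<le> C2"
    and "n \<ge> 1" and "0 < t" and "t < t0" and "2 * C2 * t < rho0"
  shows "measure (PiM {..<n} (\<lambda>_. P))
           {X \<in> space (PiM {..<n} (\<lambda>_. P)). hausdorff_dist (X ` {..<n}) M > t}
         \<le> 2 ^ (d + 1) / (rho0 * t ^ d) * exp (- (real n * rho0 * t ^ d) / 2)"
proof -
  interpret prob_space P by fact
  have spP: "space P = UNIV" using assms(5) by (simp add: sets_eq_imp_space_eq)
  have PM0: "measure P (- M) = 0" and Msets: "M \<in> sets P"
    using support_full[OF assms(4,5)] assms(6) by auto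
  define g where "g = (\<lambda>s. if s = 0 then rho0 else rho_fun P M d s)"
  have H: "\<forall>s\<in>{0..t0}. \<exists>r'. (g has_real_derivative r') (at s within {0..t0}) \<and> \<bar>r'\<bar> \<le> C2"
    using assms(10) unfolding g_def .
  have C2: "C2 \<ge> 0" using H assms(9) by force
  have b1: "\<bar>g t - g 0\<bar> \<le> C2 * t" by (rule mvt_bound[OF H]) (use assms in auto)
  have b2: "\<bar>g (t/2) - g 0\<bar> \<le> C2 * (t/2)" by (rule mvt_bound[OF H]) (use assms in auto)
  have r1: "rho_fun P M d t \<ge> rho0 / 2" using b1 assms(12,14) unfolding g_def by auto
  have r2: "rho_fun P M d (t/2) \<ge> rho0 / 2"
  proof -
    have "\<bar>rho_fun P M d (t/2) - rho0\<bar> \<le> C2 * (t/2)" using b2 assms(12) unfolding g_def by auto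
    moreover have "2 * C2 * t = 2 * (C2 * t)" "C2 * (t/2) = (C2 * t) / 2" "C2 * t \<ge> 0" using C2 assms(12) by auto
    moreover have "C2 * t < rho0 / 2" using assms(14) calculation(2) by linarith
    ultimately show ?thesis unfolding abs_le_iff by linarith
  qed
  define c where "c = rho0 / 2 * (t/2) ^ d"
  have cpos: "c > 0" using assms(8,12) by (simp add: c_def)
  have cb: "\<forall>x\<in>M. measure P (cball x (t/4)) \<ge> c"
  proof
    fix x assume "x \<in> M"
    have "c \<le> rho_fun P M d (t/2) * (t/2) ^ d"
      unfolding c_def using r2 assms(12) by (intro mult_right_mono) auto
    also have "\<dots> \<le> measure P (cball x ((t/2)/2))" by (rule rho_lower) (use \<open>x \<in> M\<close> assms(12) in auto)
    finally show "measure P (cball x (t/4)) \<ge> c" by simp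
  qed
  obtain F where F: "finite F" "F \<subseteq> M" "real (card F) \<le> 1 / c"
      "\<forall>m\<in>M. \<exists>x\<in>F. dist m x \<le> 2 * (t/4)"
    using packing[OF assms(4,5) cpos cb] assms(12) by auto
  have cardF: "real (card F) \<le> 2 ^ (d + 1) / (rho0 * t ^ d)"
    using F(3) assms(8) by (simp add: c_def power_divide field_simps)
  define Q where "Q = PiM {..<n} (\<lambda>_. P)"
  interpret Q: prob_space Q unfolding Q_def by (rule prob_space_PiM) (rule assms(4))
  have spQ: "space Q = PiE {..<n} (\<lambda>_. UNIV)" unfolding Q_def by (simp add: space_PiM spP)
  define A where "A i = PiE {..<n} (\<lambda>k. if k = i then - M else UNIV)" for i
  define B where "B x = PiE {..<n} (\<lambda>_::nat. - cball x (t/2))" for x :: 'a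
  have Msets': "- M \<in> sets P" using Msets spP by (metis Compl_eq_Diff_UNIV sets.compl_sets)
  have UNIVs: "UNIV \<in> sets P" using sets.top spP by metis
  have cbs: "- cball x r \<in> sets P" for x r using assms(5) by simp
  have Asets: "A i \<in> sets Q" for i unfolding A_def Q_def
    using Msets' UNIVs by (intro sets_PiM_I_finite) auto
  have Bsets: "B x \<in> sets Q" for x unfolding B_def Q_def
    using cbs by (intro sets_PiM_I_finite) auto
  let ?E = "{X \<in> space Q. hausdorff_dist (X ` {..<n}) M > t}"
  have sub: "?E \<subseteq> (\<Union>i\<in>{..<n}. A i) \<union> (\<Union>x\<in>F. B x)"
  proof
    fix X assume XE: "X \<in> ?E"
    show "X \<in> (\<Union>i\<in>{..<n}. A i) \<union> (\<Union>x\<in>F. B x)"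
    proof (rule ccontr)
      assume nin: "X \<notin> (\<Union>i\<in>{..<n}. A i) \<union> (\<Union>x\<in>F. B x)"
      have Xsp: "X \<in> PiE {..<n} (\<lambda>_. UNIV)" using XE spQ by auto
      have inM: "X i \<in> M" if "i < n" for i
      proof (rule ccontr)
        assume "X i \<notin> M"
        then have "X \<in> A i" using Xsp unfolding A_def by (auto simp: PiE_def)
        then show False using nin that by auto
      qed
      have hit: "\<exists>i<n. dist x (X i) \<le> t/2" if "x \<in> F" for x
      proof (rule ccontr)
        assume "\<not> ?thesis"
        then have "X \<in> B x" using Xsp unfolding B_def by (auto simp: PiE_def)
        then show False using nin that by auto
      qed
      have "hausdorff_dist (X ` {..<n}) M \<le> t"
      proof (rule hd_le)
        show "X ` {..<n} \<noteq> {}" using assms(11) by (auto simp: lessThan_empty_iff)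
        show "X ` {..<n} \<subseteq> M" using inM by auto
        show "t \<ge> 0" using assms(12) by simp
        show "\<forall>m\<in>M. \<exists>s\<in>X ` {..<n}. dist m s \<le> t"
        proof
          fix m assume "m \<in> M"
          then obtain x where x: "x \<in> F" "dist m x \<le> t/2" using F(4) by auto
          then obtain i where i: "i < n" "dist x (X i) \<le> t/2" using hit by blast
          have "dist m (X i) \<le> t" using dist_triangle[of m "X i" x] x i by linarith
          then show "\<exists>s\<in>X ` {..<n}. dist m s \<le> t" using i by auto
        qed
      qed
      then show False using XE by auto
    qed
  qed
  have mA: "measure Q (A i) = 0" if "i < n" for i
  proof -
    have "measure Q (A i) = (\<Prod>k<n. measure P (if k = i then - M else UNIV))"
      unfolding Q_def A_def using Msets' UNIVs by (intro pim_prod[OF assms(4)]) auto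
    also have "\<dots> = 0" using that PM0 by (intro prod_zero) auto
    finally show ?thesis .
  qed
  define e where "e = exp (- (real n * rho0 * t ^ d) / 2)"
  have mB: "measure Q (B x) \<le> e" if "x \<in> F" for x
  proof -
    define p where "p = measure P (cball x (t/2))"
    have p1: "p \<le> 1" unfolding p_def by (rule prob_le_1)
    have p2: "p \<ge> rho0 / 2 * t ^ d"
    proof -
      have "rho0 / 2 * t ^ d \<le> rho_fun P M d t * t ^ d"
        using r1 assms(12) by (intro mult_right_mono) auto
      also have "\<dots> \<le> p" unfolding p_def by (rule rho_lower) (use that F(2) assms(12) in auto)
      finally show ?thesis .
    qed
    have "measure Q (B x) = (\<Prod>k<n. measure P (- cball x (t/2)))"
      unfolding Q_def B_def using cbs by (intro pim_prod[OF assms(4)]) auto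
    also have "\<dots> = (1 - p) ^ n"
      using prob_compl[of "cball x (t/2)"] assms(5) spP
      by (simp add: p_def Compl_eq_Diff_UNIV)
    also have "\<dots> \<le> exp (- p) ^ n"
      using p1 exp_ge_add_one_self[of "-p"] by (intro power_mono) auto
    also have "\<dots> = exp (- (real n * p))" by (simp add: exp_of_nat_mult[symmetric])
    also have "\<dots> \<le> e" unfolding e_def using mult_left_mono[OF p2, of "real n"] by (simp add: algebra_simps)
    finally show ?thesis .
  qed
  have "measure Q ?E \<le> measure Q ((\<Union>i\<in>{..<n}. A i) \<union> (\<Union>x\<in>F. B x))"
    using sub Asets Bsets F(1) by (intro Q.finite_measure_mono sets.Un sets.finite_UN) auto
  also have "\<dots> \<le> measure Q (\<Union>i\<in>{..<n}. A i) + measure Q (\<Union>x\<in>F. B x)"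
    using Asets Bsets F(1) by (intro measure_Un_le) auto
  also have "measure Q (\<Union>i\<in>{..<n}. A i) \<le> (\<Sum>i<n. measure Q (A i))"
    using Asets by (intro measure_UNION_le) auto
  also have "\<dots> = 0" using mA by simp
  also have "measure Q (\<Union>x\<in>F. B x) \<le> (\<Sum>x\<in>F. measure Q (B x))"
    using Bsets F(1) by (intro measure_UNION_le) auto
  also have "\<dots> \<le> (\<Sum>x\<in>F. e)" using mB by (intro sum_mono) auto
  also have "\<dots> = real (card F) * e" by simp
  also have "\<dots> \<le> 2 ^ (d + 1) / (rho0 * t ^ d) * e"
    using cardF by (intro mult_right_mono) (auto simp: e_def)
  finally show ?thesis unfolding Q_def e_def by simp
qed

end
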